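(* Let $0\le\beta<1$. There is a constant $C=C(\beta)>0$ such that for every $w\in L^2(0,T;H^{-1}(\Omega))$ and $t\in(0,T)$, $$\Big\|\partial_t^\beta\int_0^te^{-(t-s)A}w(s)\,ds\Big\|_{H^{-1}(\Omega)}\le C\int_0^t(t-s)^{-\beta}\|w(s)\|_{H^{-1}(\Omega)}\,ds,$$ where for $\beta=0$, $\partial_t^0$ denotes the identity.
   Context: $\Omega\subset\mathbb{R}^d$ bounded smooth domain; $A=-\sum_{i,j}\partial_{x_i}(a_{ij}\partial_{x_j}\cdot)$ symmetric uniformly elliptic with $a_{ij}\in C^1(\overline\Omega)$ and homogeneous Dirichlet condition; $(\lambda_k,\varphi_k)$ its eigenpairs, $\{\varphi_k\}$ orthonormal basis of $L^2(\Omega)$, $\lambda_k>0$; $\langle\cdot,\cdot\rangle$ the $H^{-1}$–$H_0^1$ pairing; $e^{-tA}g=\sum_ke^{-\lambda_kt}\langle g,\varphi_k\rangle\varphi_k$. $\partial_t^\beta$ is the Caputo derivative $\partial_t^\beta\varphi(t)=\frac{1}{\Gamma(1-\beta)}\int_0^t(t-\tau)^{-\beta}\partial_\tau\varphi(\tau)d\tau$. The $H^{-1}$ norm is $\|g\|_{H^{-1}(\Omega)}=\big(\sum_k\lambda_k^{-1}|\langle g,\varphi_k\rangle|^2\big)^{1/2}$ and $\|\psi\|_{H_0^1(\Omega)}=\big(\sum_k\lambda_k|(\psi,\varphi_k)|^2\big)^{1/2}$. *)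

theory Defs
  imports "HOL-Analysis.Analysis"
begin

text \<open>Spectral (coefficient) model. An element g of H^{-1}(Omega) is represented by its
  coefficient sequence k \<mapsto> <g, phi_k>; lam k are the Dirichlet eigenvalues of A.\<close>

definition Hm1_norm :: "(nat \<Rightarrow> real) \<Rightarrow> (nat \<Rightarrow> real) \<Rightarrow> ennreal" where
  "Hm1_norm lam g =
     (if summable (\<lambda>k. (g k)\<^sup>2 / lam k) then ennreal (sqrt (\<Sum>k. (g k)\<^sup>2 / lam k)) else \<infinity>)"

definition L2_Hm1 :: "real \<Rightarrow> (nat \<Rightarrow> real) \<Rightarrow> (real \<Rightarrow> nat \<Rightarrow> real) \<Rightarrow> bool" where
  "L2_Hm1 T lam w \<longleftrightarrow>
     (\<forall>k. (\<lambda>s. w s k) \<in> borel_measurable (lebesgue_on {0<..<T})) \<and>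
     (\<integral>\<^sup>+ s\<in>{0<..<T}. (Hm1_norm lam (w s))\<^sup>2 \<partial>lebesgue) < \<infinity>"

definition heat_conv :: "(nat \<Rightarrow> real) \<Rightarrow> (real \<Rightarrow> nat \<Rightarrow> real) \<Rightarrow> real \<Rightarrow> nat \<Rightarrow> real" where
  "heat_conv lam w t = (\<lambda>k. LINT s:{0..t}|lebesgue. exp (- lam k * (t - s)) * w s k)"

definition caputo :: "real \<Rightarrow> (real \<Rightarrow> real) \<Rightarrow> real \<Rightarrow> real" where
  "caputo \<beta> f t =
     (if \<beta> = 0 then f t
      else (1 / Gamma (1 - \<beta>)) * (LINT \<tau>:{0..t}|lebesgue. (t - \<tau>) powr (- \<beta>) * deriv f \<tau>))"

definition caputo_vec :: "real \<Rightarrow> (real \<Rightarrow> nat \<Rightarrow> real) \<Rightarrow> real \<Rightarrow> nat \<Rightarrow> real" where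
  "caputo_vec \<beta> u t = (\<lambda>k. caputo \<beta> (\<lambda>\<tau>. u \<tau> k) t)"

end

theory Submission imports Defs "HOL-Real_Asymp.Real_Asymp" begin


lemma sqdiv_nn: "(\<And>k. lam k > 0) \<Longrightarrow> 0 \<le> (g k)\<^sup>2 / (lam k::real)"
  by (meson divide_nonneg_nonneg less_imp_le zero_le_power2)

lemma Hm1_norm_alt:
  assumes "\<And>k. lam k > 0"
  shows "Hm1_norm lam g = (let E = (\<Sum>k. ennreal ((g k)\<^sup>2 / lam k)) in
      if E = \<infinity> then \<infinity> else ennreal (sqrt (enn2real E)))"
proof -
  have nn: "\<And>k. 0 \<le> (g k)\<^sup>2 / lam k" using sqdiv_nn[OF assms] .
  show ?thesis
  proof (cases "summable (\<lambda>k. (g k)\<^sup>2 / lam k)")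
    case True
    have E: "(\<Sum>k. ennreal ((g k)\<^sup>2 / lam k)) = ennreal (\<Sum>k. (g k)\<^sup>2 / lam k)"
      by (rule suminf_ennreal2[OF nn True])
    have "0 \<le> (\<Sum>k. (g k)\<^sup>2 / lam k)" by (rule suminf_nonneg[OF True nn])
    then show ?thesis unfolding Hm1_norm_def Let_def E using True by simp
  next
    case False
    have E: "(\<Sum>k. ennreal ((g k)\<^sup>2 / lam k)) = \<infinity>"
      using summable_suminf_not_top[of "\<lambda>k. (g k)\<^sup>2 / lam k", OF nn] False by auto
    show ?thesis unfolding Hm1_norm_def Let_def E using False by simp
  qed
qed

lemma Hm1_norm_measurable:
  assumes "\<And>k. lam k > 0" and meas: "\<And>k. (\<lambda>s. x s k) \<in> borel_measurable M"
  shows "(\<lambda>s. Hm1_norm lam (x s)) \<in> borel_measurable M"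
proof -
  have "(\<lambda>s. Hm1_norm lam (x s)) = (\<lambda>s. let E = (\<Sum>k. ennreal ((x s k)\<^sup>2 / lam k)) in
      if E = \<infinity> then \<infinity> else ennreal (sqrt (enn2real E)))"
    using Hm1_norm_alt[OF assms(1)] by auto
  also have "\<dots> \<in> borel_measurable M"
    unfolding Let_def using meas by measurable
  finally show ?thesis .
qed


lemma partial_le_Hm1:
  assumes "\<And>k. lam k > 0"
  shows "ennreal (sqrt (\<Sum>k<N. (g k)\<^sup>2 / lam k)) \<le> Hm1_norm lam g"
proof (cases "summable (\<lambda>k. (g k)\<^sup>2 / lam k)")
  case True
  have "(\<Sum>k<N. (g k)\<^sup>2 / lam k) \<le> (\<Sum>k. (g k)\<^sup>2 / lam k)"
    by (rule sum_le_suminf[OF True]) (use sqdiv_nn[OF assms] in auto)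
  then have "sqrt (\<Sum>k<N. (g k)\<^sup>2 / lam k) \<le> sqrt (\<Sum>k. (g k)\<^sup>2 / lam k)"
    by (rule real_sqrt_le_mono)
  then show ?thesis using True by (simp add: Hm1_norm_def ennreal_leI)
next
  case False
  then show ?thesis by (simp add: Hm1_norm_def)
qed

lemma minkowski_Hm1:
  fixes lam c :: "nat \<Rightarrow> real" and x :: "'a \<Rightarrow> nat \<Rightarrow> real" and \<rho> :: "'a \<Rightarrow> ennreal"
  assumes lam: "\<And>k. lam k > 0" and C: "C > 0"
    and meas: "\<And>k. (\<lambda>s. x s k) \<in> borel_measurable M" and rho: "\<rho> \<in> borel_measurable M"
    and bound: "\<And>k. ennreal \<bar>c k\<bar> \<le> ennreal C * (\<integral>\<^sup>+ s. \<rho> s * ennreal \<bar>x s k\<bar> \<partial>M)"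
  shows "Hm1_norm lam c \<le> ennreal C * (\<integral>\<^sup>+ s. \<rho> s * Hm1_norm lam (x s) \<partial>M)"
proof (cases "(\<integral>\<^sup>+ s. \<rho> s * Hm1_norm lam (x s) \<partial>M) = \<infinity>")
  case True
  then show ?thesis using C by (simp add: ennreal_mult_top)
next
  case False
  define R where "R = (\<integral>\<^sup>+ s. \<rho> s * Hm1_norm lam (x s) \<partial>M)"
  have "R < \<infinity>" using False unfolding R_def by (simp add: top.not_eq_extremum)
  then obtain r where r: "R = ennreal r" "0 \<le> r" by (cases R) auto
  have Hmeas: "(\<lambda>s. Hm1_norm lam (x s)) \<in> borel_measurable M"
    by (rule Hm1_norm_measurable[OF lam meas])
  define I where "I k = (\<integral>\<^sup>+ s. \<rho> s * ennreal (\<bar>x s k\<bar> / sqrt (lam k)) \<partial>M)" for k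
  have yk: "ennreal (\<bar>x s k\<bar> / sqrt (lam k)) \<le> Hm1_norm lam (x s)" for s k
  proof -
    have "ennreal (sqrt (\<Sum>j<Suc k. (x s j)\<^sup>2 / lam j)) \<le> Hm1_norm lam (x s)"
      by (rule partial_le_Hm1[OF lam])
    moreover have "\<bar>x s k\<bar> / sqrt (lam k) \<le> sqrt (\<Sum>j<Suc k. (x s j)\<^sup>2 / lam j)"
    proof -
      have "\<bar>x s k\<bar> / sqrt (lam k) = sqrt ((x s k)\<^sup>2 / lam k)"
        using lam[of k] by (simp add: real_sqrt_divide)
      also have "\<dots> \<le> sqrt (\<Sum>j<Suc k. (x s j)\<^sup>2 / lam j)"
        by (rule real_sqrt_le_mono, rule member_le_sum) (use sqdiv_nn[OF lam] in auto)
      finally show ?thesis .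
    qed
    ultimately show ?thesis by (meson ennreal_leI order_trans)
  qed
  have IleR: "I k \<le> R" for k
    unfolding I_def R_def by (rule nn_integral_mono) (simp add: mult_left_mono yk)
  define i where "i k = enn2real (I k)" for k
  have Ii: "I k = ennreal (i k)" for k
  proof -
    have "I k \<le> ennreal r" using IleR[of k] r(1) by simp
    then have "I k < top" using ennreal_less_top[of r] by (rule order.strict_trans1)
    then show ?thesis by (simp add: i_def less_top)
  qed
  have i_nn: "0 \<le> i k" for k unfolding i_def by simp
  have ck: "\<bar>c k\<bar> \<le> C * sqrt (lam k) * i k" for k
  proof -
    have "(\<integral>\<^sup>+ s. \<rho> s * ennreal \<bar>x s k\<bar> \<partial>M)
        = (\<integral>\<^sup>+ s. ennreal (sqrt (lam k)) * (\<rho> s * ennreal (\<bar>x s k\<bar> / sqrt (lam k))) \<partial>M)"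
    proof (rule nn_integral_cong)
      fix s
      have "ennreal \<bar>x s k\<bar> = ennreal (sqrt (lam k)) * ennreal (\<bar>x s k\<bar> / sqrt (lam k))"
        using lam[of k] by (simp add: ennreal_mult[symmetric])
      then show "\<rho> s * ennreal \<bar>x s k\<bar> = ennreal (sqrt (lam k)) * (\<rho> s * ennreal (\<bar>x s k\<bar> / sqrt (lam k)))"
        by (simp add: ac_simps)
    qed
    also have "\<dots> = ennreal (sqrt (lam k)) * I k"
      unfolding I_def using meas rho by (subst nn_integral_cmult) auto
    finally have "ennreal \<bar>c k\<bar> \<le> ennreal C * (ennreal (sqrt (lam k)) * ennreal (i k))"
      using bound[of k] Ii by simp
    then have "ennreal \<bar>c k\<bar> \<le> ennreal (C * sqrt (lam k) * i k)"
      using C lam[of k] i_nn[of k] by (simp add: ennreal_mult ac_simps)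
    then show ?thesis using C lam[of k] i_nn[of k] by (subst (asm) ennreal_le_iff) auto
  qed
  have SN: "(\<Sum>k<N. (i k)\<^sup>2) \<le> r\<^sup>2" for N
  proof -
    define S where "S = (\<Sum>k<N. (i k)\<^sup>2)"
    have S_nn: "0 \<le> S" unfolding S_def by (simp add: sum_nonneg)
    have "(\<Sum>k<N. ennreal (i k) * I k) = (\<Sum>k<N. ennreal ((i k)\<^sup>2))"
      by (intro sum.cong refl) (simp add: Ii power2_eq_square ennreal_mult[OF i_nn i_nn])
    also have "\<dots> = ennreal S" unfolding S_def by (rule sum_ennreal) simp
    finally have "ennreal S = (\<Sum>k<N. ennreal (i k) * I k)" by simp
    also have "\<dots> = (\<Sum>k<N. (\<integral>\<^sup>+ s. ennreal (i k) * (\<rho> s * ennreal (\<bar>x s k\<bar> / sqrt (lam k))) \<partial>M))"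
      unfolding I_def using meas rho by (subst nn_integral_cmult) auto
    also have "\<dots> = (\<integral>\<^sup>+ s. (\<Sum>k<N. ennreal (i k) * (\<rho> s * ennreal (\<bar>x s k\<bar> / sqrt (lam k)))) \<partial>M)"
      using meas rho by (subst nn_integral_sum) auto
    also have "\<dots> \<le> (\<integral>\<^sup>+ s. ennreal (sqrt S) * (\<rho> s * Hm1_norm lam (x s)) \<partial>M)"
    proof (rule nn_integral_mono)
      fix s
      have "(\<Sum>k<N. ennreal (i k) * (\<rho> s * ennreal (\<bar>x s k\<bar> / sqrt (lam k))))
          = \<rho> s * ennreal (\<Sum>k<N. i k * (\<bar>x s k\<bar> / sqrt (lam k)))"
      proof -
        have "(\<Sum>k<N. ennreal (i k) * (\<rho> s * ennreal (\<bar>x s k\<bar> / sqrt (lam k))))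
          = (\<Sum>k<N. \<rho> s * ennreal (i k * (\<bar>x s k\<bar> / sqrt (lam k))))"
          by (intro sum.cong refl) (subst ennreal_mult'[OF i_nn], simp only: ac_simps)
        also have "\<dots> = \<rho> s * (\<Sum>k<N. ennreal (i k * (\<bar>x s k\<bar> / sqrt (lam k))))"
          by (simp add: sum_distrib_left)
        also have "(\<Sum>k<N. ennreal (i k * (\<bar>x s k\<bar> / sqrt (lam k))))
             = ennreal (\<Sum>k<N. i k * (\<bar>x s k\<bar> / sqrt (lam k)))"
          by (rule sum_ennreal) (use i_nn lam in \<open>auto intro!: divide_nonneg_nonneg mult_nonneg_nonneg simp: order.strict_implies_order\<close>)
        finally show ?thesis .
      qed
      also have "\<dots> \<le> \<rho> s * (ennreal (sqrt S) * Hm1_norm lam (x s))"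
      proof (rule mult_left_mono)
        have cs: "(\<Sum>k<N. i k * (\<bar>x s k\<bar> / sqrt (lam k)))\<^sup>2
              \<le> (\<Sum>k<N. (i k)\<^sup>2) * (\<Sum>k<N. (\<bar>x s k\<bar> / sqrt (lam k))\<^sup>2)"
          by (rule Cauchy_Schwarz_ineq_sum)
        have eq: "(\<Sum>k<N. (\<bar>x s k\<bar> / sqrt (lam k))\<^sup>2) = (\<Sum>k<N. (x s k)\<^sup>2 / lam k)"
          using lam by (intro sum.cong refl) (simp add: power_divide order.strict_implies_order)
        have "(\<Sum>k<N. i k * (\<bar>x s k\<bar> / sqrt (lam k))) \<le> sqrt S * sqrt (\<Sum>k<N. (x s k)\<^sup>2 / lam k)"
          using real_le_rsqrt[OF cs] unfolding eq S_def by (simp add: real_sqrt_mult)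
        then have "ennreal (\<Sum>k<N. i k * (\<bar>x s k\<bar> / sqrt (lam k)))
             \<le> ennreal (sqrt S) * ennreal (sqrt (\<Sum>k<N. (x s k)\<^sup>2 / lam k))"
          by (subst ennreal_mult[symmetric]) (use S_nn sum_nonneg[OF sqdiv_nn[OF lam]] in \<open>auto intro: ennreal_leI\<close>)
        also have "\<dots> \<le> ennreal (sqrt S) * Hm1_norm lam (x s)"
          by (intro mult_left_mono partial_le_Hm1[OF lam]) auto
        finally show "ennreal (\<Sum>k<N. i k * (\<bar>x s k\<bar> / sqrt (lam k))) \<le> ennreal (sqrt S) * Hm1_norm lam (x s)" .
      qed auto
      finally show "(\<Sum>k<N. ennreal (i k) * (\<rho> s * ennreal (\<bar>x s k\<bar> / sqrt (lam k))))
           \<le> ennreal (sqrt S) * (\<rho> s * Hm1_norm lam (x s))" by (simp add: ac_simps)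
    qed
    also have "\<dots> = ennreal (sqrt S) * R"
      unfolding R_def using Hmeas rho by (subst nn_integral_cmult) auto
    also have "\<dots> = ennreal (sqrt S * r)" using r S_nn by (simp add: ennreal_mult)
    finally have "ennreal S \<le> ennreal (sqrt S * r)" .
    then have "S \<le> sqrt S * r" using S_nn r by (subst (asm) ennreal_le_iff) auto
    then have ss: "sqrt S * sqrt S \<le> sqrt S * r" using S_nn by simp
    have "sqrt S \<le> r"
    proof (cases "sqrt S = 0")
      case True then show ?thesis using r by simp
    next
      case False
      then have "sqrt S > 0" using S_nn by simp
      then show ?thesis using ss mult_le_cancel_left_pos by blast
    qed
    then have "(sqrt S)\<^sup>2 \<le> r\<^sup>2" using S_nn by (intro power_mono) auto
    then show ?thesis unfolding S_def[symmetric] using S_nn by simp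
  qed
  have termk: "(c k)\<^sup>2 / lam k \<le> C\<^sup>2 * (i k)\<^sup>2" for k
  proof -
    have "\<bar>c k\<bar>\<^sup>2 \<le> (C * sqrt (lam k) * i k)\<^sup>2"
      using ck[of k] by (intro power_mono) auto
    then have "(c k)\<^sup>2 \<le> C\<^sup>2 * lam k * (i k)\<^sup>2" using lam[of k] by (simp add: power_mult_distrib)
    then show ?thesis using lam[of k] by (simp add: divide_le_eq ac_simps)
  qed
  have psum: "(\<Sum>k<N. (c k)\<^sup>2 / lam k) \<le> C\<^sup>2 * r\<^sup>2" for N
  proof -
    have "(\<Sum>k<N. (c k)\<^sup>2 / lam k) \<le> (\<Sum>k<N. C\<^sup>2 * (i k)\<^sup>2)" by (intro sum_mono termk)
    also have "\<dots> = C\<^sup>2 * (\<Sum>k<N. (i k)\<^sup>2)" by (simp add: sum_distrib_left)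
    also have "\<dots> \<le> C\<^sup>2 * r\<^sup>2" by (intro mult_left_mono SN) auto
    finally show ?thesis .
  qed
  have nn: "\<And>k. 0 \<le> (c k)\<^sup>2 / lam k" using sqdiv_nn[OF lam] .
  have summ: "summable (\<lambda>k. (c k)\<^sup>2 / lam k)"
    by (rule summableI_nonneg_bounded[OF nn psum])
  have "(\<Sum>k. (c k)\<^sup>2 / lam k) \<le> C\<^sup>2 * r\<^sup>2" by (rule suminf_le_const[OF summ psum])
  then have "sqrt (\<Sum>k. (c k)\<^sup>2 / lam k) \<le> C * r"
  proof -
    have "sqrt (\<Sum>k. (c k)\<^sup>2 / lam k) \<le> sqrt ((C * r)\<^sup>2)"
      using \<open>(\<Sum>k. (c k)\<^sup>2 / lam k) \<le> C\<^sup>2 * r\<^sup>2\<close> by (intro real_sqrt_le_mono) (simp add: power_mult_distrib)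
    then show ?thesis using C r by simp
  qed
  then have "ennreal (sqrt (\<Sum>k. (c k)\<^sup>2 / lam k)) \<le> ennreal (C * r)" by (rule ennreal_leI)
  also have "\<dots> = ennreal C * R" unfolding r(1) using C r(2) by (intro ennreal_mult) auto
  finally have le1: "ennreal (sqrt (\<Sum>k. (c k)\<^sup>2 / lam k)) \<le> ennreal C * R" .
  have eqc: "Hm1_norm lam c = ennreal (sqrt (\<Sum>k. (c k)\<^sup>2 / lam k))"
    unfolding Hm1_norm_def using summ by (rule if_P)
  show ?thesis using le1 unfolding eqc R_def .
qed




lemma powr_integral_end:
  fixes \<beta> t c :: real
  assumes "0 \<le> \<beta>" "\<beta> < 1" "0 \<le> c"
  shows "((\<lambda>x. (t - x) powr (-\<beta>)) has_integral (c powr (1 - \<beta>) / (1 - \<beta>))) {t - c..t}"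
proof -
  have "((\<lambda>x. x powr (-\<beta>)) has_integral (c powr (-\<beta> + 1) / (-\<beta> + 1))) {0..c}"
    by (rule has_integral_powr_from_0) (use assms in auto)
  then have "((\<lambda>x. (-x) powr (-\<beta>)) has_integral (c powr (1 - \<beta>) / (1 - \<beta>))) {-c..-0}"
    by (subst has_integral_reflect_real) (simp add: add.commute)
  then have "((\<lambda>x. (-x) powr (-\<beta>)) has_integral (c powr (1 - \<beta>) / (1 - \<beta>))) (cbox (-c) 0)"
    by simp
  from has_integral_affinity'[OF this, of 1 "-t"]
  show ?thesis by simp
qed

lemma exp_integral_right:
  fixes lam s :: real
  assumes "lam > 0"
  shows "(\<integral>\<^sup>+x. ennreal (lam * exp (- lam * (x - s))) * indicator {s ..} x \<partial>lborel) = 1"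
proof -
  have "(\<integral>\<^sup>+x. ennreal (lam * exp (- lam * (x - s))) * indicator {s ..} x \<partial>lborel)
      = ennreal (0 - (- exp (- lam * (s - s))))"
  proof (rule nn_integral_FTC_atLeast[where F="\<lambda>x. - exp (- lam * (x - s))" and T=0])
    show "(\<lambda>x. lam * exp (- lam * (x - s))) \<in> borel_measurable borel" by measurable
    show "DERIV (\<lambda>x. - exp (- lam * (x - s))) x :> lam * exp (- lam * (x - s))" if "s \<le> x" for x
      by (auto intro!: derivative_eq_intros)
    show "0 \<le> lam * exp (- lam * (x - s))" if "s \<le> x" for x using assms by simp
    show "((\<lambda>x. - exp (- lam * (x - s))) \<longlongrightarrow> 0) at_top"
      using assms by real_asymp
  qed
  then show ?thesis by simp
qed

lemma xexp_le1: "(x::real) * exp (- x) \<le> 1"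
proof -
  have "x \<le> exp x" using exp_ge_add_one_self[of x] by linarith
  then show ?thesis by (simp add: exp_minus field_simps)
qed

lemma kernel_bound:
  fixes \<beta> lam s t :: real
  assumes b: "0 \<le> \<beta>" "\<beta> < 1" and lam: "lam > 0" and st: "s < t"
  shows "(\<integral>\<^sup>+\<tau>. ennreal (lam * (t - \<tau>) powr (-\<beta>) * exp (- lam * (\<tau> - s))) * indicator {s<..<t} \<tau> \<partial>lborel)
          \<le> ennreal (2 powr \<beta> * (1 + 1 / (1 - \<beta>)) * (t - s) powr (-\<beta>))"
proof -
  define c where "c = (t - s) / 2"
  have c: "c > 0" using st by (simp add: c_def)
  define m where "m = t - c"
  define A where "A = c powr (-\<beta>)"
  define B where "B = lam * exp (- lam * c)"
  have A: "A \<ge> 0" "B \<ge> 0" unfolding A_def B_def using lam by auto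
  have pw: "ennreal (lam * (t - \<tau>) powr (-\<beta>) * exp (- lam * (\<tau> - s))) * indicator {s<..<t} \<tau>
      \<le> ennreal (A * (lam * exp (- lam * (\<tau> - s)))) * indicator {s..} \<tau>
       + ennreal (B * (t - \<tau>) powr (-\<beta>)) * indicator {m..t} \<tau>" for \<tau>
  proof (cases "\<tau> \<in> {s<..<t}")
    case False then show ?thesis by simp
  next
    case True
    show ?thesis
    proof (cases "\<tau> \<le> m")
      case True
      have "(t - \<tau>) powr (-\<beta>) \<le> c powr (-\<beta>)"
        by (rule powr_mono2') (use b c True \<open>\<tau> \<in> {s<..<t}\<close> in \<open>auto simp: m_def\<close>)
      then have "lam * (t - \<tau>) powr (-\<beta>) * exp (- lam * (\<tau> - s)) \<le> A * (lam * exp (- lam * (\<tau> - s)))"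
        unfolding A_def using lam by (simp add: mult_right_mono)
      then show ?thesis using \<open>\<tau> \<in> {s<..<t}\<close>
        by (simp add: ennreal_leI add_increasing2)
    next
      case False
      have "c \<le> \<tau> - s" using False unfolding m_def c_def by (simp add: field_simps)
      then have ex: "exp (- lam * (\<tau> - s)) \<le> exp (- lam * c)"
        using lam by (simp add: mult_left_mono)
      have "lam * (t - \<tau>) powr (-\<beta>) * exp (- lam * (\<tau> - s)) \<le> B * (t - \<tau>) powr (-\<beta>)"
        using mult_left_mono[OF ex, of "lam * (t - \<tau>) powr (-\<beta>)"] lam unfolding B_def by (simp add: ac_simps)
      then show ?thesis using \<open>\<tau> \<in> {s<..<t}\<close> False
        by (simp add: ennreal_leI add_increasing)
    qed
  qed
  have I1: "(\<integral>\<^sup>+\<tau>. ennreal (A * (lam * exp (- lam * (\<tau> - s)))) * indicator {s..} \<tau> \<partial>lborel) = ennreal A"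
  proof -
    have "(\<integral>\<^sup>+\<tau>. ennreal (A * (lam * exp (- lam * (\<tau> - s)))) * indicator {s..} \<tau> \<partial>lborel)
        = (\<integral>\<^sup>+\<tau>. ennreal A * (ennreal (lam * exp (- lam * (\<tau> - s))) * indicator {s..} \<tau>) \<partial>lborel)"
      by (intro nn_integral_cong) (simp add: ennreal_mult'[OF A(1)] mult.assoc)
    also have "\<dots> = ennreal A * (\<integral>\<^sup>+\<tau>. ennreal (lam * exp (- lam * (\<tau> - s))) * indicator {s..} \<tau> \<partial>lborel)"
      by (rule nn_integral_cmult) measurable
    also have "\<dots> = ennreal A" using exp_integral_right[OF lam, of s] by simp
    finally show ?thesis .
  qed
  have I2: "(\<integral>\<^sup>+\<tau>. ennreal (B * (t - \<tau>) powr (-\<beta>)) * indicator {m..t} \<tau> \<partial>lborel)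
       = ennreal (B * (c powr (1 - \<beta>) / (1 - \<beta>)))"
  proof -
    have hi: "((\<lambda>x. B * (t - x) powr (-\<beta>)) has_integral (B * (c powr (1 - \<beta>) / (1 - \<beta>)))) {m..t}"
      unfolding m_def using has_integral_mult_right[OF powr_integral_end[OF b less_imp_le[OF c], of t], of B] .
    show ?thesis
      by (rule nn_integral_has_integral_lebesgue'[OF _ hi]) (use A in auto)
  qed
  have "(\<integral>\<^sup>+\<tau>. ennreal (lam * (t - \<tau>) powr (-\<beta>) * exp (- lam * (\<tau> - s))) * indicator {s<..<t} \<tau> \<partial>lborel)
      \<le> (\<integral>\<^sup>+\<tau>. ennreal (A * (lam * exp (- lam * (\<tau> - s)))) * indicator {s..} \<tau>
       + ennreal (B * (t - \<tau>) powr (-\<beta>)) * indicator {m..t} \<tau> \<partial>lborel)"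
    by (rule nn_integral_mono) (rule pw)
  also have "\<dots> = (\<integral>\<^sup>+\<tau>. ennreal (A * (lam * exp (- lam * (\<tau> - s)))) * indicator {s..} \<tau> \<partial>lborel)
       + (\<integral>\<^sup>+\<tau>. ennreal (B * (t - \<tau>) powr (-\<beta>)) * indicator {m..t} \<tau> \<partial>lborel)"
    by (rule nn_integral_add) measurable
  also have "\<dots> = ennreal A + ennreal (B * (c powr (1 - \<beta>) / (1 - \<beta>)))"
    unfolding I1 I2 ..
  also have "\<dots> = ennreal (A + B * (c powr (1 - \<beta>) / (1 - \<beta>)))"
    using A b c by (intro ennreal_plus[symmetric]) auto
  also have "\<dots> \<le> ennreal (2 powr \<beta> * (1 + 1 / (1 - \<beta>)) * (t - s) powr (-\<beta>))"
  proof (rule ennreal_leI)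
    have cp: "c powr (1 - \<beta>) = c * A" unfolding A_def using c
      by (simp add: powr_diff powr_minus divide_inverse)
    have "B * (c powr (1 - \<beta>) / (1 - \<beta>)) = A * ((lam * c) * exp (- (lam * c))) / (1 - \<beta>)"
      unfolding cp B_def by (simp add: field_simps)
    also have "\<dots> \<le> A * 1 / (1 - \<beta>)"
      using A b xexp_le1[of "lam * c"] by (intro divide_right_mono mult_left_mono) auto
    finally have "A + B * (c powr (1 - \<beta>) / (1 - \<beta>)) \<le> A * (1 + 1 / (1 - \<beta>))"
      by (simp add: field_simps)
    moreover have "A = 2 powr \<beta> * (t - s) powr (-\<beta>)"
      unfolding A_def c_def using st by (simp add: powr_divide powr_minus field_simps)
    ultimately show "A + B * (c powr (1 - \<beta>) / (1 - \<beta>)) \<le> 2 powr \<beta> * (1 + 1 / (1 - \<beta>)) * (t - s) powr (-\<beta>)"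
      by (simp only: ac_simps)
  qed
  finally show ?thesis .
qed



lemma negligible_uminus_image:
  fixes N :: "real set"
  assumes "negligible N"
  shows "negligible (uminus ` N)"
  by (rule negligible_differentiable_image_negligible[OF order_refl assms])
     (auto intro!: derivative_intros simp: differentiable_on_def)

lemma indef_integral_deriv_ae:
  fixes G :: "real \<Rightarrow> real"
  assumes G: "\<And>a b. G integrable_on {a..b}"
  obtains N where "negligible N"
    "\<And>x. x \<notin> N \<Longrightarrow> 0 < x \<Longrightarrow> ((\<lambda>y. integral {0..y} G) has_real_derivative G x) (at x)"
proof -
  have G1: "G integrable_on cbox a b" for a b using G[of a b] by simp
  obtain N1 where N1: "negligible N1"
    and R1: "\<And>x e. \<lbrakk>x \<notin> N1; 0 < e\<rbrakk> \<Longrightarrow>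
               \<exists>d>0. \<forall>h. 0 < h \<and> h < d \<longrightarrow>
                         norm(integral (cbox x (x + h *\<^sub>R One)) G /\<^sub>R h ^ DIM(real) - G x) < e"
    using integrable_ccontinuous_explicit[OF G1] by blast
  define G2 where "G2 = (\<lambda>y. G (- y))"
  have G2: "G2 integrable_on cbox a b" for a b
    using integrable_reflect[where f=G and a="-b" and b="-a"] G1[of "-b" "-a"] unfolding G2_def by simp
  obtain N2 where N2: "negligible N2"
    and R2: "\<And>x e. \<lbrakk>x \<notin> N2; 0 < e\<rbrakk> \<Longrightarrow>
               \<exists>d>0. \<forall>h. 0 < h \<and> h < d \<longrightarrow>
                         norm(integral (cbox x (x + h *\<^sub>R One)) G2 /\<^sub>R h ^ DIM(real) - G2 x) < e"
    using integrable_ccontinuous_explicit[OF G2] by blast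
  define F where "F = (\<lambda>y. integral {0..y} G)"
  show ?thesis
  proof (rule that[of "N1 \<union> uminus ` N2"])
    show "negligible (N1 \<union> uminus ` N2)"
      using N1 negligible_uminus_image[OF N2] by (rule negligible_Un)
    fix x :: real
    assume xN: "x \<notin> N1 \<union> uminus ` N2" and x0: "0 < x"
    have xN1: "x \<notin> N1" and xN2: "-x \<notin> N2" using xN by (auto simp: image_iff)
    have right: "((\<lambda>h. (F (x + h) - F x) / h) \<longlongrightarrow> G x) (at_right 0)"
    proof (rule tendstoI)
      fix e :: real assume e: "0 < e"
      obtain d where d: "d > 0" and dd: "\<And>h. 0 < h \<Longrightarrow> h < d \<Longrightarrow> \<bar>integral {x..x+h} G / h - G x\<bar> < e"
        using R1[OF xN1 e] by (auto simp: divide_inverse_commute)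
      show "\<forall>\<^sub>F h in at_right 0. dist ((F (x + h) - F x) / h) (G x) < e"
        unfolding eventually_at_right_field
      proof (intro exI[of _ d] conjI allI impI)
        fix h :: real assume h: "0 < h" "h < d"
        have "integral {0..x} G + integral {x..x+h} G = integral {0..x+h} G"
          by (rule Henstock_Kurzweil_Integration.integral_combine) (use x0 h G in auto)
        then have "F (x + h) - F x = integral {x..x+h} G" unfolding F_def by simp
        then show "dist ((F (x + h) - F x) / h) (G x) < e"
          using dd[OF h] by (simp add: dist_real_def)
      qed (use d in auto)
    qed
    have left: "((\<lambda>h. (F (x + h) - F x) / h) \<longlongrightarrow> G x) (at_left 0)"
    proof (rule tendstoI)
      fix e :: real assume e: "0 < e"
      obtain d where d: "d > 0" and dd: "\<And>h. 0 < h \<Longrightarrow> h < d \<Longrightarrow> \<bar>integral {-x..-x+h} G2 / h - G2 (-x)\<bar> < e"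
        using R2[OF xN2 e] by (auto simp: divide_inverse_commute)
      show "\<forall>\<^sub>F h in at_left 0. dist ((F (x + h) - F x) / h) (G x) < e"
        unfolding eventually_at_left_field
      proof (intro exI[of _ "- min d x"] conjI allI impI)
        fix h :: real assume h: "- min d x < h" "h < 0"
        have "integral {0..x+h} G + integral {x+h..x} G = integral {0..x} G"
          by (rule Henstock_Kurzweil_Integration.integral_combine) (use x0 h G in auto)
        then have "F (x + h) - F x = - integral {x+h..x} G" unfolding F_def by simp
        also have "integral {x+h..x} G = integral {-x..-x+(-h)} G2"
          unfolding G2_def using Henstock_Kurzweil_Integration.integral_reflect_real[where b=x and a="x+h" and f=G] by simp
        finally have eq: "(F (x + h) - F x) / h = integral {-x..-x+(-h)} G2 / (-h)"
          by simp
        show "dist ((F (x + h) - F x) / h) (G x) < e"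
          using dd[of "-h"] h unfolding eq by (simp add: dist_real_def G2_def)
      qed (use d x0 in auto)
    qed
    have "((\<lambda>h. (F (x + h) - F x) / h) \<longlongrightarrow> G x) (at 0)"
      by (rule filterlim_split_at[OF left right])
    then show "((\<lambda>y. integral {0..y} G) has_real_derivative G x) (at x)"
      unfolding DERIV_def F_def .
  qed
qed


lemma abs_integral_le_nn:
  fixes g :: "'a \<Rightarrow> real"
  shows "ennreal \<bar>integral\<^sup>L M g\<bar> \<le> (\<integral>\<^sup>+ x. ennreal \<bar>g x\<bar> \<partial>M)"
proof (cases "integrable M g")
  case True
  then show ?thesis using integral_norm_bound_ennreal[OF True] by simp
next
  case False
  then show ?thesis by (simp add: not_integrable_integral_eq)
qed

lemma null_lebesgue_finite:
  fixes A :: "real set"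
  assumes "finite A"
  shows "A \<in> null_sets lebesgue"
  using assms negligible_finite negligible_iff_null_sets by blast

lemma coef_bound:
  fixes \<beta> lam t :: real and u :: "real \<Rightarrow> real"
  assumes b: "0 < \<beta>" "\<beta> < 1" and lam: "lam > 0" and t: "0 < t"
    and um: "u \<in> borel_measurable (lebesgue_on {0<..<t})"
  defines "f \<equiv> (\<lambda>\<tau>. LINT s:{0..\<tau>}|lebesgue. exp (- lam * (\<tau> - s)) * u s)"
  shows "ennreal \<bar>caputo \<beta> f t\<bar>
     \<le> ennreal ((1 + 2 powr \<beta> * (1 + 1 / (1 - \<beta>))) / Gamma (1 - \<beta>))
        * (\<integral>\<^sup>+ s. ennreal ((t - s) powr (-\<beta>)) * ennreal \<bar>u s\<bar> \<partial>lebesgue_on {0<..<t})"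
proof -
  define K1 where "K1 = 2 powr \<beta> * (1 + 1 / (1 - \<beta>))"
  define \<Gamma> where "\<Gamma> = Gamma (1 - \<beta>)"
  have \<Gamma>: "\<Gamma> > 0" unfolding \<Gamma>_def using b by simp
  have K1: "K1 \<ge> 0" unfolding K1_def using b by simp
  define v0 where "v0 = (\<lambda>s. if s \<in> {0<..<t} then u s else 0)"
  have v0m: "v0 \<in> borel_measurable lebesgue"
    unfolding v0_def by (subst borel_measurable_if) (use um in auto)
  define Q where "Q = (\<integral>\<^sup>+ s. ennreal ((t - s) powr (-\<beta>) * \<bar>v0 s\<bar>) \<partial>lebesgue)"
  have RHS: "(\<integral>\<^sup>+ s. ennreal ((t - s) powr (-\<beta>)) * ennreal \<bar>u s\<bar> \<partial>lebesgue_on {0<..<t}) = Q"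
  proof -
    have "(\<integral>\<^sup>+ s. ennreal ((t - s) powr (-\<beta>)) * ennreal \<bar>u s\<bar> \<partial>lebesgue_on {0<..<t})
        = (\<integral>\<^sup>+ s. ennreal ((t - s) powr (-\<beta>)) * ennreal \<bar>u s\<bar> * indicator {0<..<t} s \<partial>lebesgue)"
      by (rule nn_integral_restrict_space) simp
    also have "\<dots> = Q" unfolding Q_def
      by (intro nn_integral_cong) (auto simp: v0_def ennreal_mult indicator_def)
    finally show ?thesis .
  qed
  show ?thesis
  proof (cases "Q = \<infinity>")
    case True
    define Kc where "Kc = (1 + 2 powr \<beta> * (1 + 1 / (1 - \<beta>))) / Gamma (1 - \<beta>)"
    have "Kc > 0" unfolding Kc_def
      using b by (intro divide_pos_pos add_pos_nonneg) auto
    then have "ennreal Kc * top = top"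
      by (simp add: ennreal_mult_top)
    then show ?thesis unfolding RHS True Kc_def[symmetric] by simp
  next
    case False
    then have Qfin: "Q < \<infinity>" by (simp add: top.not_eq_extremum)
    note v0m[measurable]
    have pm0: "(\<lambda>s::real. (t - s) powr (-\<beta>)) \<in> borel_measurable lborel" by measurable
    have pm[measurable]: "(\<lambda>s::real. (t - s) powr (-\<beta>)) \<in> borel_measurable lebesgue"
      using measurable_completion[OF pm0] .
    have av0[measurable]: "(\<lambda>s. \<bar>v0 s\<bar>) \<in> borel_measurable lebesgue" using v0m by measurable
    have em0: "(\<lambda>s::real. exp (lam * s)) \<in> borel_measurable lborel" by measurable
    have em[measurable]: "(\<lambda>s::real. exp (lam * s)) \<in> borel_measurable lebesgue"
      using measurable_completion[OF em0] .
    have idm0: "(\<lambda>s::real. s) \<in> borel_measurable lborel" by simp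
    have idm: "(\<lambda>s::real. s) \<in> borel_measurable lebesgue"
      using measurable_completion[OF idm0] .
    have L1: "(\<integral>\<^sup>+ s. ennreal \<bar>v0 s\<bar> \<partial>lebesgue) < \<infinity>"
    proof -
      have "(\<integral>\<^sup>+ s. ennreal \<bar>v0 s\<bar> \<partial>lebesgue)
          \<le> (\<integral>\<^sup>+ s. ennreal (t powr \<beta>) * ennreal ((t - s) powr (-\<beta>) * \<bar>v0 s\<bar>) \<partial>lebesgue)"
      proof (rule nn_integral_mono)
        fix s
        show "ennreal \<bar>v0 s\<bar> \<le> ennreal (t powr \<beta>) * ennreal ((t - s) powr (-\<beta>) * \<bar>v0 s\<bar>)"
        proof (cases "s \<in> {0<..<t}")
          case True
          have "t powr (-\<beta>) \<le> (t - s) powr (-\<beta>)" by (rule powr_mono2') (use True b in auto)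
          then have "t powr \<beta> * t powr (-\<beta>) \<le> t powr \<beta> * (t - s) powr (-\<beta>)"
            by (intro mult_left_mono) auto
          then have "1 \<le> t powr \<beta> * (t - s) powr (-\<beta>)" using t by (simp add: powr_minus)
          then have "1 * \<bar>v0 s\<bar> \<le> (t powr \<beta> * (t - s) powr (-\<beta>)) * \<bar>v0 s\<bar>"
            by (intro mult_right_mono) auto
          then have "\<bar>v0 s\<bar> \<le> t powr \<beta> * ((t - s) powr (-\<beta>) * \<bar>v0 s\<bar>)" by (simp add: mult.assoc)
          then show ?thesis by (simp add: ennreal_mult[symmetric] ennreal_leI)
        next
          case False then show ?thesis by (auto simp: v0_def)
        qed
      qed
      also have "\<dots> = ennreal (t powr \<beta>) * Q" unfolding Q_def
        by (rule nn_integral_cmult) measurable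
      also have "\<dots> < \<infinity>" using Qfin by (simp add: ennreal_mult_less_top)
      finally show ?thesis .
    qed
    define G where "G = (\<lambda>s. exp (lam * s) * v0 s)"
    have Gm[measurable]: "G \<in> borel_measurable lebesgue" unfolding G_def by measurable
    have Gint: "integrable lebesgue G"
    proof (rule integrableI_bounded)
      show "G \<in> borel_measurable lebesgue" by (rule Gm)
      have "(\<integral>\<^sup>+ s. ennreal (norm (G s)) \<partial>lebesgue) \<le> (\<integral>\<^sup>+ s. ennreal (exp (lam * t)) * ennreal \<bar>v0 s\<bar> \<partial>lebesgue)"
      proof (rule nn_integral_mono)
        fix s
        show "ennreal (norm (G s)) \<le> ennreal (exp (lam * t)) * ennreal \<bar>v0 s\<bar>"
        proof (cases "s \<in> {0<..<t}")
          case True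
          then have "exp (lam * s) \<le> exp (lam * t)" using lam by simp
          then have "exp (lam * s) * \<bar>v0 s\<bar> \<le> exp (lam * t) * \<bar>v0 s\<bar>" by (intro mult_right_mono) auto
          then show ?thesis by (simp add: G_def abs_mult ennreal_mult[symmetric] ennreal_leI)
        next
          case False then show ?thesis by (auto simp: G_def v0_def)
        qed
      qed
      also have "\<dots> = ennreal (exp (lam * t)) * (\<integral>\<^sup>+ s. ennreal \<bar>v0 s\<bar> \<partial>lebesgue)"
        by (rule nn_integral_cmult) measurable
      also have "\<dots> < \<infinity>" using L1 by (simp add: ennreal_mult_less_top)
      finally show "(\<integral>\<^sup>+ s. ennreal (norm (G s)) \<partial>lebesgue) < \<infinity>" .
    qed
    have Gi: "G integrable_on {a..b}" for a b
      using integrable_on_subcbox[OF integrable_on_lebesgue[OF Gint], of a b] by simp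
    obtain N where N: "negligible N"
      and dN: "\<And>x. x \<notin> N \<Longrightarrow> 0 < x \<Longrightarrow> ((\<lambda>y. integral {0..y} G) has_real_derivative G x) (at x)"
      using indef_integral_deriv_ae[OF Gi] by blast
    have fF: "f \<tau> = exp (- lam * \<tau>) * integral {0..\<tau>} G" if \<tau>: "\<tau> \<in> {0<..<t}" for \<tau>
    proof -
      note idm[measurable]
      have eqAE: "AE s in lebesgue. indicator {0..\<tau>} s *\<^sub>R (exp (- lam * (\<tau> - s)) * u s)
                     = exp (- lam * \<tau>) * (indicator {0..\<tau>} s *\<^sub>R G s)"
        using AE_not_in[OF null_lebesgue_finite[of "{0}", OF finite.insertI[OF finite.emptyI]]]
      proof eventually_elim
        case (elim s)
        show ?case
        proof (cases "s \<in> {0..\<tau>}")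
          case True
          then have "s \<in> {0<..<t}" using elim \<tau> by auto
          then show ?thesis using True
            by (simp add: G_def v0_def exp_add[symmetric] algebra_simps)
        next
          case False then show ?thesis by simp
        qed
      qed
      have m2: "(\<lambda>s. exp (- lam * \<tau>) * (indicator {0..\<tau>} s *\<^sub>R G s)) \<in> borel_measurable lebesgue"
        by measurable
      have m1: "(\<lambda>s. indicator {0..\<tau>} s *\<^sub>R (exp (- lam * (\<tau> - s)) * u s)) \<in> borel_measurable lebesgue"
        by (rule borel_measurable_AE[OF m2]) (use eqAE in \<open>auto elim: AE_mp\<close>)
      have "f \<tau> = integral\<^sup>L lebesgue (\<lambda>s. indicator {0..\<tau>} s *\<^sub>R (exp (- lam * (\<tau> - s)) * u s))"
        unfolding f_def set_lebesgue_integral_def ..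
      also have "\<dots> = integral\<^sup>L lebesgue (\<lambda>s. exp (- lam * \<tau>) * (indicator {0..\<tau>} s *\<^sub>R G s))"
        by (rule integral_cong_AE[OF m1 m2 eqAE])
      also have "\<dots> = exp (- lam * \<tau>) * integral\<^sup>L lebesgue (\<lambda>s. indicator {0..\<tau>} s *\<^sub>R G s)"
        by (rule integral_mult_right_zero)
      also have "integral\<^sup>L lebesgue (\<lambda>s. indicator {0..\<tau>} s *\<^sub>R G s) = integral {0..\<tau>} G"
      proof -
        have "set_integrable lebesgue {0..\<tau>} G"
          unfolding set_integrable_def by (rule integrable_mult_indicator) (use Gint in auto)
        from set_lebesgue_integral_eq_integral(2)[OF this]
        show ?thesis unfolding set_lebesgue_integral_def .
      qed
      finally show ?thesis .
    qed
    have dF: "deriv f \<tau> = u \<tau> - lam * f \<tau>" if \<tau>: "\<tau> \<in> {0<..<t}" "\<tau> \<notin> N" for \<tau>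
    proof -
      have d1: "((\<lambda>y. exp (- lam * y)) has_real_derivative exp (- lam * \<tau>) * (- lam)) (at \<tau>)"
        by (auto intro!: derivative_eq_intros)
      have d2: "((\<lambda>y. integral {0..y} G) has_real_derivative G \<tau>) (at \<tau>)"
        using dN[of \<tau>] \<tau> by auto
      have d3: "((\<lambda>y. exp (- lam * y) * integral {0..y} G) has_real_derivative
                  exp (- lam * \<tau>) * (- lam) * integral {0..\<tau>} G + G \<tau> * exp (- lam * \<tau>)) (at \<tau>)"
        by (rule DERIV_mult[OF d1 d2])
      have d4: "(f has_real_derivative
                  exp (- lam * \<tau>) * (- lam) * integral {0..\<tau>} G + G \<tau> * exp (- lam * \<tau>)) (at \<tau>)"
        by (rule has_field_derivative_transform_within_open[OF d3, of "{0<..<t}"]) (use \<tau> fF in auto)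
      have "deriv f \<tau> = exp (- lam * \<tau>) * (- lam) * integral {0..\<tau>} G + G \<tau> * exp (- lam * \<tau>)"
        by (rule DERIV_imp_deriv[OF d4])
      also have "\<dots> = u \<tau> - lam * f \<tau>"
        using fF[OF \<tau>(1)] \<tau>(1) by (simp add: G_def v0_def exp_add[symmetric] algebra_simps)
      finally show ?thesis .
    qed
    obtain a where am: "a \<in> borel_measurable lborel" and aAE0: "AE x in lborel. v0 x = a x"
      using completion_ex_borel_measurable_real[OF v0m] by blast
    note am[measurable]
    have aAE: "AE x in lebesgue. v0 x = a x" by (rule AE_completion[OF aAE0])
    define Ws where "Ws = (\<lambda>\<tau> s::real. if 0 < s \<and> s < \<tau> then exp (- lam * (\<tau> - s)) else 0)"
    define Wt where "Wt = (\<lambda>\<tau>::real. if 0 < \<tau> \<and> \<tau> < t then lam * (t - \<tau>) powr (-\<beta>) else 0)"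
    have Wsm[measurable]: "(\<lambda>(\<tau>, s). Ws \<tau> s) \<in> borel_measurable (lborel \<Otimes>\<^sub>M lborel)"
      unfolding Ws_def by measurable
    have Wtm[measurable]: "Wt \<in> borel_measurable lborel" unfolding Wt_def by measurable
    define Ba where "Ba = (\<lambda>\<tau>. \<integral>\<^sup>+ s. ennreal (Ws \<tau> s * \<bar>a s\<bar>) \<partial>lborel)"
    have Bam[measurable]: "Ba \<in> borel_measurable lborel" unfolding Ba_def by measurable
    have fB: "ennreal \<bar>f \<tau>\<bar> \<le> Ba \<tau>" if \<tau>: "\<tau> \<in> {0<..<t}" for \<tau>
    proof -
      have "ennreal \<bar>f \<tau>\<bar> = ennreal \<bar>integral\<^sup>L lebesgue (\<lambda>s. indicator {0..\<tau>} s *\<^sub>R (exp (- lam * (\<tau> - s)) * u s))\<bar>"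
        unfolding f_def set_lebesgue_integral_def ..
      also have "\<dots> \<le> (\<integral>\<^sup>+ s. ennreal \<bar>indicator {0..\<tau>} s *\<^sub>R (exp (- lam * (\<tau> - s)) * u s)\<bar> \<partial>lebesgue)"
        by (rule abs_integral_le_nn)
      also have "\<dots> = (\<integral>\<^sup>+ s. ennreal (Ws \<tau> s * \<bar>a s\<bar>) \<partial>lebesgue)"
      proof (rule nn_integral_cong_AE)
        have n2: "{0, \<tau>} \<in> null_sets lebesgue" by (rule null_lebesgue_finite) simp
        show "AE s in lebesgue. ennreal \<bar>indicator {0..\<tau>} s *\<^sub>R (exp (- lam * (\<tau> - s)) * u s)\<bar> = ennreal (Ws \<tau> s * \<bar>a s\<bar>)"
          using AE_not_in[OF n2] aAE
        proof eventually_elim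
          case (elim s)
          show ?case
          proof (cases "0 < s \<and> s < \<tau>")
            case True
            then have "s \<in> {0<..<t}" using \<tau> by auto
            then show ?thesis using True elim by (auto simp: Ws_def v0_def abs_mult)
          next
            case False
            then have "s \<notin> {0..\<tau>}" using elim by auto
            then show ?thesis using False by (auto simp: Ws_def)
          qed
        qed
      qed
      also have "\<dots> = Ba \<tau>" unfolding Ba_def by (rule nn_integral_completion)
      finally show ?thesis .
    qed
    define P1 where "P1 = (\<integral>\<^sup>+ \<tau>. ennreal (indicator {0<..<t} \<tau> * (t - \<tau>) powr (-\<beta>) * \<bar>a \<tau>\<bar>) \<partial>lborel)"
    have QP1: "Q = P1"
    proof -
      have "Q = (\<integral>\<^sup>+ s. ennreal ((t - s) powr (-\<beta>) * \<bar>v0 s\<bar>) \<partial>lborel)"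
        unfolding Q_def by (rule nn_integral_completion)
      also have "\<dots> = P1" unfolding P1_def
        by (rule nn_integral_cong_AE) (use aAE0 in \<open>eventually_elim, auto simp: v0_def indicator_def split: if_splits\<close>)
      finally show ?thesis .
    qed
    have caputo_eq: "caputo \<beta> f t = (1 / \<Gamma>) * integral\<^sup>L lebesgue (\<lambda>\<tau>. indicator {0..t} \<tau> *\<^sub>R ((t - \<tau>) powr (-\<beta>) * deriv f \<tau>))"
      unfolding caputo_def set_lebesgue_integral_def \<Gamma>_def using b by simp
    have step1: "ennreal \<bar>caputo \<beta> f t\<bar> \<le> ennreal (1 / \<Gamma>) *
        (\<integral>\<^sup>+ \<tau>. ennreal \<bar>indicator {0..t} \<tau> *\<^sub>R ((t - \<tau>) powr (-\<beta>) * deriv f \<tau>)\<bar> \<partial>lebesgue)"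
    proof -
      have "ennreal \<bar>caputo \<beta> f t\<bar> = ennreal (1 / \<Gamma>) *
          ennreal \<bar>integral\<^sup>L lebesgue (\<lambda>\<tau>. indicator {0..t} \<tau> *\<^sub>R ((t - \<tau>) powr (-\<beta>) * deriv f \<tau>))\<bar>"
      proof -
        have "\<bar>caputo \<beta> f t\<bar> = (1 / \<Gamma>) * \<bar>integral\<^sup>L lebesgue (\<lambda>\<tau>. indicator {0..t} \<tau> *\<^sub>R ((t - \<tau>) powr (-\<beta>) * deriv f \<tau>))\<bar>"
          unfolding caputo_eq using \<Gamma> by (simp add: abs_mult)
        then show ?thesis using \<Gamma> by (simp only:) (rule ennreal_mult; simp)
      qed
      also have "\<dots> \<le> ennreal (1 / \<Gamma>) *
        (\<integral>\<^sup>+ \<tau>. ennreal \<bar>indicator {0..t} \<tau> *\<^sub>R ((t - \<tau>) powr (-\<beta>) * deriv f \<tau>)\<bar> \<partial>lebesgue)"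
        by (intro mult_left_mono abs_integral_le_nn) auto
      finally show ?thesis .
    qed
    have step2: "(\<integral>\<^sup>+ \<tau>. ennreal \<bar>indicator {0..t} \<tau> *\<^sub>R ((t - \<tau>) powr (-\<beta>) * deriv f \<tau>)\<bar> \<partial>lebesgue)
        \<le> (\<integral>\<^sup>+ \<tau>. ennreal (indicator {0<..<t} \<tau> * (t - \<tau>) powr (-\<beta>) * \<bar>a \<tau>\<bar>) + ennreal (Wt \<tau>) * Ba \<tau> \<partial>lebesgue)"
    proof (rule nn_integral_mono_AE)
      have n2: "{0, t} \<in> null_sets lebesgue" by (rule null_lebesgue_finite) simp
      have nN: "N \<in> null_sets lebesgue" using N negligible_iff_null_sets by blast
      show "AE \<tau> in lebesgue. ennreal \<bar>indicator {0..t} \<tau> *\<^sub>R ((t - \<tau>) powr (-\<beta>) * deriv f \<tau>)\<bar>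
          \<le> ennreal (indicator {0<..<t} \<tau> * (t - \<tau>) powr (-\<beta>) * \<bar>a \<tau>\<bar>) + ennreal (Wt \<tau>) * Ba \<tau>"
        using AE_not_in[OF n2] AE_not_in[OF nN] aAE
      proof eventually_elim
        case (elim \<tau>)
        show ?case
        proof (cases "\<tau> \<in> {0<..<t}")
          case False
          then have "\<tau> \<notin> {0..t}" using elim by auto
          then show ?thesis by simp
        next
          case True
          have uv: "u \<tau> = a \<tau>" using elim True by (simp add: v0_def)
          have pnn: "0 \<le> (t - \<tau>) powr (-\<beta>)" by simp
          have "\<bar>(t - \<tau>) powr (-\<beta>) * deriv f \<tau>\<bar> = (t - \<tau>) powr (-\<beta>) * \<bar>a \<tau> - lam * f \<tau>\<bar>"
            using dF[of \<tau>] True elim uv by (simp add: abs_mult)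
          also have "\<dots> \<le> (t - \<tau>) powr (-\<beta>) * (\<bar>a \<tau>\<bar> + lam * \<bar>f \<tau>\<bar>)"
            using lam by (intro mult_left_mono) (auto simp: abs_mult intro: order_trans[OF abs_triangle_ineq4])
          finally have i1: "\<bar>(t - \<tau>) powr (-\<beta>) * deriv f \<tau>\<bar>
              \<le> (t - \<tau>) powr (-\<beta>) * \<bar>a \<tau>\<bar> + (lam * (t - \<tau>) powr (-\<beta>)) * \<bar>f \<tau>\<bar>"
            by (simp add: algebra_simps)
          have "ennreal \<bar>indicator {0..t} \<tau> *\<^sub>R ((t - \<tau>) powr (-\<beta>) * deriv f \<tau>)\<bar>
              = ennreal \<bar>(t - \<tau>) powr (-\<beta>) * deriv f \<tau>\<bar>" using True by simp
          also have "\<dots> \<le> ennreal ((t - \<tau>) powr (-\<beta>) * \<bar>a \<tau>\<bar> + (lam * (t - \<tau>) powr (-\<beta>)) * \<bar>f \<tau>\<bar>)"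
            by (rule ennreal_leI[OF i1])
          also have "\<dots> = ennreal ((t - \<tau>) powr (-\<beta>) * \<bar>a \<tau>\<bar>) + ennreal (lam * (t - \<tau>) powr (-\<beta>)) * ennreal \<bar>f \<tau>\<bar>"
            using lam by (simp add: ennreal_plus ennreal_mult)
          also have "\<dots> \<le> ennreal ((t - \<tau>) powr (-\<beta>) * \<bar>a \<tau>\<bar>) + ennreal (lam * (t - \<tau>) powr (-\<beta>)) * Ba \<tau>"
            by (intro add_left_mono mult_left_mono fB True) auto
          also have "\<dots> = ennreal (indicator {0<..<t} \<tau> * (t - \<tau>) powr (-\<beta>) * \<bar>a \<tau>\<bar>) + ennreal (Wt \<tau>) * Ba \<tau>"
            using True by (simp add: Wt_def)
          finally show ?thesis .
        qed
      qed
    qed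
    have step3: "(\<integral>\<^sup>+ \<tau>. ennreal (indicator {0<..<t} \<tau> * (t - \<tau>) powr (-\<beta>) * \<bar>a \<tau>\<bar>) + ennreal (Wt \<tau>) * Ba \<tau> \<partial>lebesgue)
        = P1 + (\<integral>\<^sup>+ \<tau>. ennreal (Wt \<tau>) * Ba \<tau> \<partial>lborel)"
    proof -
      have "(\<integral>\<^sup>+ \<tau>. ennreal (indicator {0<..<t} \<tau> * (t - \<tau>) powr (-\<beta>) * \<bar>a \<tau>\<bar>) + ennreal (Wt \<tau>) * Ba \<tau> \<partial>lebesgue)
         = (\<integral>\<^sup>+ \<tau>. ennreal (indicator {0<..<t} \<tau> * (t - \<tau>) powr (-\<beta>) * \<bar>a \<tau>\<bar>) + ennreal (Wt \<tau>) * Ba \<tau> \<partial>lborel)"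
        by (rule nn_integral_completion)
      also have "\<dots> = P1 + (\<integral>\<^sup>+ \<tau>. ennreal (Wt \<tau>) * Ba \<tau> \<partial>lborel)"
        unfolding P1_def by (rule nn_integral_add) measurable
      finally show ?thesis .
    qed
    have step4: "(\<integral>\<^sup>+ \<tau>. ennreal (Wt \<tau>) * Ba \<tau> \<partial>lborel) \<le> ennreal K1 * P1"
    proof -
      have Wsm2[measurable]: "(\<lambda>(s, \<tau>). Ws \<tau> s) \<in> borel_measurable (lborel \<Otimes>\<^sub>M lborel)"
        unfolding Ws_def by measurable
      have Wsm1[measurable]: "(\<lambda>s. Ws \<tau> s) \<in> borel_measurable lborel" for \<tau>
        unfolding Ws_def by measurable
      have "(\<integral>\<^sup>+ \<tau>. ennreal (Wt \<tau>) * Ba \<tau> \<partial>lborel)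
          = (\<integral>\<^sup>+ \<tau>. (\<integral>\<^sup>+ s. ennreal (Wt \<tau>) * ennreal (Ws \<tau> s * \<bar>a s\<bar>) \<partial>lborel) \<partial>lborel)"
        unfolding Ba_def by (intro nn_integral_cong nn_integral_cmult[symmetric]) measurable
      also have "\<dots> = (\<integral>\<^sup>+ s. (\<integral>\<^sup>+ \<tau>. ennreal (Wt \<tau>) * ennreal (Ws \<tau> s * \<bar>a s\<bar>) \<partial>lborel) \<partial>lborel)"
        by (rule lborel_pair.Fubini') measurable
      also have "\<dots> \<le> (\<integral>\<^sup>+ s. ennreal K1 * ennreal (indicator {0<..<t} s * (t - s) powr (-\<beta>) * \<bar>a s\<bar>) \<partial>lborel)"
      proof (rule nn_integral_mono)
        fix s :: real
        show "(\<integral>\<^sup>+ \<tau>. ennreal (Wt \<tau>) * ennreal (Ws \<tau> s * \<bar>a s\<bar>) \<partial>lborel)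
            \<le> ennreal K1 * ennreal (indicator {0<..<t} s * (t - s) powr (-\<beta>) * \<bar>a s\<bar>)"
        proof (cases "s \<in> {0<..<t}")
          case False
          have "(\<integral>\<^sup>+ \<tau>. ennreal (Wt \<tau>) * ennreal (Ws \<tau> s * \<bar>a s\<bar>) \<partial>lborel) = (\<integral>\<^sup>+ (\<tau>::real). 0 \<partial>lborel)"
          proof (rule nn_integral_cong)
            fix \<tau> :: real
            show "ennreal (Wt \<tau>) * ennreal (Ws \<tau> s * \<bar>a s\<bar>) = 0"
              using False by (auto simp: Wt_def Ws_def)
          qed
          then show ?thesis by simp
        next
          case True
          have "(\<integral>\<^sup>+ \<tau>. ennreal (Wt \<tau>) * ennreal (Ws \<tau> s * \<bar>a s\<bar>) \<partial>lborel)
              = (\<integral>\<^sup>+ \<tau>. ennreal \<bar>a s\<bar> * (ennreal (lam * (t - \<tau>) powr (-\<beta>) * exp (- lam * (\<tau> - s))) * indicator {s<..<t} \<tau>) \<partial>lborel)"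
          proof (rule nn_integral_cong)
            fix \<tau> :: real
            show "ennreal (Wt \<tau>) * ennreal (Ws \<tau> s * \<bar>a s\<bar>)
                = ennreal \<bar>a s\<bar> * (ennreal (lam * (t - \<tau>) powr (-\<beta>) * exp (- lam * (\<tau> - s))) * indicator {s<..<t} \<tau>)"
            proof (cases "\<tau> \<in> {s<..<t}")
              case True
              then have "0 < \<tau>" using \<open>s \<in> {0<..<t}\<close> by auto
              then show ?thesis using True \<open>s \<in> {0<..<t}\<close> lam
                by (simp add: Wt_def Ws_def ennreal_mult[symmetric] mult_ac)
            next
              case False
              then show ?thesis using \<open>s \<in> {0<..<t}\<close> by (auto simp: Wt_def Ws_def)
            qed
          qed
          also have "\<dots> = ennreal \<bar>a s\<bar> * (\<integral>\<^sup>+ \<tau>. ennreal (lam * (t - \<tau>) powr (-\<beta>) * exp (- lam * (\<tau> - s))) * indicator {s<..<t} \<tau> \<partial>lborel)"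
            by (rule nn_integral_cmult) measurable
          also have "\<dots> \<le> ennreal \<bar>a s\<bar> * ennreal (2 powr \<beta> * (1 + 1 / (1 - \<beta>)) * (t - s) powr (-\<beta>))"
            by (intro mult_left_mono kernel_bound) (use b lam True in auto)
          also have "\<dots> = ennreal K1 * ennreal (indicator {0<..<t} s * (t - s) powr (-\<beta>) * \<bar>a s\<bar>)"
          proof -
            have "ennreal \<bar>a s\<bar> * ennreal (K1 * (t - s) powr (-\<beta>)) = ennreal (\<bar>a s\<bar> * (K1 * (t - s) powr (-\<beta>)))"
              by (rule ennreal_mult[symmetric]) (use K1 in auto)
            moreover have "ennreal K1 * ennreal (indicator {0<..<t} s * (t - s) powr (-\<beta>) * \<bar>a s\<bar>)
                = ennreal (K1 * (indicator {0<..<t} s * (t - s) powr (-\<beta>) * \<bar>a s\<bar>))"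
              by (rule ennreal_mult[symmetric]) (use K1 in auto)
            ultimately show ?thesis using True unfolding K1_def[symmetric] by (simp add: mult_ac)
          qed
          finally show ?thesis .
        qed
      qed
      also have "\<dots> = ennreal K1 * P1" unfolding P1_def
        by (rule nn_integral_cmult) measurable
      finally show ?thesis .
    qed
    have e1: "P1 + ennreal K1 * P1 = ennreal (1 + K1) * P1"
    proof -
      have "ennreal (1 + K1) = 1 + ennreal K1" using K1 by (simp add: ennreal_plus)
      then show ?thesis by (simp add: distrib_right)
    qed
    have e2: "ennreal (1 / \<Gamma>) * ennreal (1 + K1) = ennreal ((1 + K1) / \<Gamma>)"
    proof -
      have "ennreal (1 / \<Gamma>) * ennreal (1 + K1) = ennreal ((1 / \<Gamma>) * (1 + K1))"
        using K1 \<Gamma> by (intro ennreal_mult[symmetric]) auto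
      then show ?thesis by simp
    qed
    have "ennreal \<bar>caputo \<beta> f t\<bar> \<le> ennreal (1 / \<Gamma>) *
        (\<integral>\<^sup>+ \<tau>. ennreal \<bar>indicator {0..t} \<tau> *\<^sub>R ((t - \<tau>) powr (-\<beta>) * deriv f \<tau>)\<bar> \<partial>lebesgue)"
      by (rule step1)
    also have "\<dots> \<le> ennreal (1 / \<Gamma>) * (P1 + (\<integral>\<^sup>+ \<tau>. ennreal (Wt \<tau>) * Ba \<tau> \<partial>lborel))"
      using step2 unfolding step3 by (rule mult_left_mono) simp
    also have "\<dots> \<le> ennreal (1 / \<Gamma>) * (P1 + ennreal K1 * P1)"
      by (intro mult_left_mono add_left_mono step4) simp
    also have "\<dots> = ennreal ((1 + K1) / \<Gamma>) * P1"
      unfolding e1 mult.assoc[symmetric] e2 ..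
    finally show ?thesis unfolding RHS QP1 K1_def \<Gamma>_def .
  qed
qed


lemma coef_bound0:
  fixes lam t :: real and u :: "real \<Rightarrow> real"
  assumes lam: "lam > 0" and t: "0 < t"
  defines "f \<equiv> (\<lambda>\<tau>. LINT s:{0..\<tau>}|lebesgue. exp (- lam * (\<tau> - s)) * u s)"
  shows "ennreal \<bar>caputo 0 f t\<bar>
     \<le> ennreal 1 * (\<integral>\<^sup>+ s. ennreal ((t - s) powr (-0)) * ennreal \<bar>u s\<bar> \<partial>lebesgue_on {0<..<t})"
proof -
  have "ennreal \<bar>caputo 0 f t\<bar> = ennreal \<bar>integral\<^sup>L lebesgue (\<lambda>s. indicator {0..t} s *\<^sub>R (exp (- lam * (t - s)) * u s))\<bar>"
    unfolding caputo_def f_def set_lebesgue_integral_def by simp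
  also have "\<dots> \<le> (\<integral>\<^sup>+ s. ennreal \<bar>indicator {0..t} s *\<^sub>R (exp (- lam * (t - s)) * u s)\<bar> \<partial>lebesgue)"
    by (rule abs_integral_le_nn)
  also have "\<dots> \<le> (\<integral>\<^sup>+ s. ennreal ((t - s) powr (-0)) * ennreal \<bar>u s\<bar> * indicator {0<..<t} s \<partial>lebesgue)"
  proof (rule nn_integral_mono_AE)
    have n2: "{0, t} \<in> null_sets lebesgue" by (rule null_lebesgue_finite) simp
    show "AE s in lebesgue. ennreal \<bar>indicator {0..t} s *\<^sub>R (exp (- lam * (t - s)) * u s)\<bar>
        \<le> ennreal ((t - s) powr (-0)) * ennreal \<bar>u s\<bar> * indicator {0<..<t} s"
      using AE_not_in[OF n2]
    proof eventually_elim
      case (elim s)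
      show ?case
      proof (cases "s \<in> {0<..<t}")
        case True
        have "exp (- lam * (t - s)) \<le> 1" using True lam by simp
        then have "exp (- lam * (t - s)) * \<bar>u s\<bar> \<le> 1 * \<bar>u s\<bar>" by (intro mult_right_mono) auto
        then show ?thesis using True by (simp add: abs_mult ennreal_leI)
      next
        case False
        then have "s \<notin> {0..t}" using elim by auto
        then show ?thesis by simp
      qed
    qed
  qed
  also have "\<dots> = (\<integral>\<^sup>+ s. ennreal ((t - s) powr (-0)) * ennreal \<bar>u s\<bar> \<partial>lebesgue_on {0<..<t})"
    by (rule nn_integral_restrict_space[symmetric]) simp
  finally show ?thesis by simp
qed

theorem lemma3p5:
  fixes \<beta> :: real
  assumes "0 \<le> \<beta>" and "\<beta> < 1"
  shows "\<exists>C>0. \<forall>(lam :: nat \<Rightarrow> real) (T :: real) (w :: real \<Rightarrow> nat \<Rightarrow> real) (t :: real).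
           (\<forall>k. lam k > 0) \<longrightarrow> mono lam \<longrightarrow> filterlim lam at_top sequentially \<longrightarrow>
           L2_Hm1 T lam w \<longrightarrow> 0 < t \<longrightarrow> t < T \<longrightarrow>
           Hm1_norm lam (caputo_vec \<beta> (heat_conv lam w) t)
             \<le> ennreal C * (\<integral>\<^sup>+ s\<in>{0<..<t}. ennreal ((t - s) powr (- \<beta>)) * Hm1_norm lam (w s) \<partial>lebesgue)"
proof -
  define C where "C = (if \<beta> = 0 then 1 else (1 + 2 powr \<beta> * (1 + 1 / (1 - \<beta>))) / Gamma (1 - \<beta>))"
  have Cpos: "C > 0" unfolding C_def using assms
    by (auto intro!: divide_pos_pos add_pos_nonneg)
  show ?thesis
  proof (intro exI[of _ C] conjI allI impI Cpos)
    fix lam :: "nat \<Rightarrow> real" and T t :: real and w :: "real \<Rightarrow> nat \<Rightarrow> real"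
    assume lam: "\<forall>k. lam k > 0" and "mono lam" and "filterlim lam at_top sequentially"
      and L2: "L2_Hm1 T lam w" and t: "0 < t" and tT: "t < T"
    have lam': "\<And>k. lam k > 0" using lam by blast
    have measT: "(\<lambda>s. w s k) \<in> borel_measurable (lebesgue_on {0<..<T})" for k
      using L2 unfolding L2_Hm1_def by blast
    have meas: "(\<lambda>s. w s k) \<in> borel_measurable (lebesgue_on {0<..<t})" for k
      by (rule measurable_restrict_mono[OF measT]) (use tT in auto)
    have rho0: "(\<lambda>s::real. ennreal ((t - s) powr (- \<beta>))) \<in> borel_measurable lborel" by measurable
    have rho: "(\<lambda>s::real. ennreal ((t - s) powr (- \<beta>))) \<in> borel_measurable (lebesgue_on {0<..<t})"
      by (rule measurable_restrict_space1[OF measurable_completion[OF rho0]])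
    have bound: "ennreal \<bar>caputo_vec \<beta> (heat_conv lam w) t k\<bar>
        \<le> ennreal C * (\<integral>\<^sup>+ s. ennreal ((t - s) powr (- \<beta>)) * ennreal \<bar>w s k\<bar> \<partial>lebesgue_on {0<..<t})" for k
    proof (cases "\<beta> = 0")
      case True
      show ?thesis
        using coef_bound0[OF lam'[of k] t, of "\<lambda>s. w s k"] True
        unfolding caputo_vec_def heat_conv_def C_def by simp
    next
      case False
      then have b: "0 < \<beta>" using assms by simp
      show ?thesis
        using coef_bound[OF b assms(2) lam'[of k] t meas[of k]] False
        unfolding caputo_vec_def heat_conv_def C_def by simp
    qed
    have "Hm1_norm lam (caputo_vec \<beta> (heat_conv lam w) t)
        \<le> ennreal C * (\<integral>\<^sup>+ s. ennreal ((t - s) powr (- \<beta>)) * Hm1_norm lam (w s) \<partial>lebesgue_on {0<..<t})"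
      by (rule minkowski_Hm1[OF lam' Cpos meas rho bound])
    also have "(\<integral>\<^sup>+ s. ennreal ((t - s) powr (- \<beta>)) * Hm1_norm lam (w s) \<partial>lebesgue_on {0<..<t})
        = (\<integral>\<^sup>+ s\<in>{0<..<t}. ennreal ((t - s) powr (- \<beta>)) * Hm1_norm lam (w s) \<partial>lebesgue)"
      by (rule nn_integral_restrict_space) simp
    finally show "Hm1_norm lam (caputo_vec \<beta> (heat_conv lam w) t)
             \<le> ennreal C * (\<integral>\<^sup>+ s\<in>{0<..<t}. ennreal ((t - s) powr (- \<beta>)) * Hm1_norm lam (w s) \<partial>lebesgue)" .
  qed
qed

end
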